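(* Let $\alpha,\beta<1$ be real numbers (not necessarily positive). Let $A,B\subset\mathbb{N}$ be such that $A(X)\le C\frac{\sqrt{X}}{(\log X)^{\alpha}}$ and $B(X)\le C\frac{\sqrt{X}}{(\log X)^{\beta}}$ for some constant $C>0$ and all sufficiently large $X$. Then there is a constant $C'>0$ such that for all sufficiently large $X$, $$(AB)(X)\le \sum_{\substack{a\in A,\ b\in B\\ ab\le X}}1\le C'\sqrt{X}(\log X)^{1-\alpha-\beta}.$$
   Context: $\mathbb{N}$ is the set of positive integers; $AB=\{ab:a\in A,b\in B\}$; for $S\subset\mathbb{N}_0$, $S(X)=|S\cap[1,X]|$. *)

theory Defs
  imports Complex_Main
begin

definition setmul :: "nat set \<Rightarrow> nat set \<Rightarrow> nat set" where
  "setmul A B = {a * b | a b. a \<in> A \<and> b \<in> B}"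

definition cnt :: "nat set \<Rightarrow> real \<Rightarrow> nat" where
  "cnt S X = card {n \<in> S. 1 \<le> n \<and> real n \<le> X}"

end

theory Submission imports Defs
begin


lemma growth:
  fixes a x :: real assumes "a < 1" "x \<ge> 0"
  shows "(x+1) powr (-a) \<le> max 1 (1/(1-a)) * ((x+1) powr (1-a) - x powr (1-a))"
proof (cases "a \<le> 0")
  case True
  have e1: "(x+1) powr (1-a) = (x+1) * (x+1) powr (-a)"
    by (simp add: powr_add[of "x+1" 1 "-a", simplified] assms)
  have e2: "x powr (1-a) = x * x powr (-a)"
    using powr_add[of x 1 "-a"] assms(2) by (cases "x = 0") auto
  have m: "x powr (-a) \<le> (x+1) powr (-a)" using True assms by (intro powr_mono2) auto
  have "x * x powr (-a) \<le> x * (x+1) powr (-a)" using m assms by (intro mult_left_mono) auto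
  hence d: "(x+1) powr (-a) \<le> (x+1) powr (1-a) - x powr (1-a)"
    unfolding e1 e2 by (simp add: algebra_simps)
  have "(x+1) powr (1-a) - x powr (1-a) \<ge> 0" using d by (meson order_trans powr_ge_zero)
  hence "1 * ((x+1) powr (1-a) - x powr (1-a)) \<le> max 1 (1/(1-a)) * ((x+1) powr (1-a) - x powr (1-a))"
    by (intro mult_right_mono) auto
  then show ?thesis using d by simp
next
  case False
  show ?thesis
  proof (cases "x = 0")
    case True
    then show ?thesis by simp
  next
    case x0: False
    with assms have xp: "x > 0" by simp
    have "\<exists>z. x < z \<and> z < x+1 \<and> (x+1) powr (1-a) - x powr (1-a) = ((x+1) - x) * ((1-a) * z powr ((1-a) - 1))"
      apply (rule MVT2)
      using xp has_real_derivative_powr[of _ "1-a"] by auto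
    then obtain z where z: "x < z" "z < x+1" "(x+1) powr (1-a) - x powr (1-a) = (1-a) * z powr (-a)"
      by auto
    have "(x+1) powr (-a) \<le> z powr (-a)" using False z xp by (intro powr_mono2') auto
    hence "(x+1) powr (-a) \<le> (1/(1-a)) * ((x+1) powr (1-a) - x powr (1-a))"
      using z(3) assms(1) by simp
    also have "\<dots> \<le> max 1 (1/(1-a)) * ((x+1) powr (1-a) - x powr (1-a))"
      using z(3) assms(1) by (intro mult_right_mono) auto
    finally show ?thesis .
  qed
qed


lemma fin_le: "finite {n\<in>(A::nat set). 1 \<le> n \<and> real n \<le> Y}"
  by (rule finite_subset[of _ "{..nat \<lfloor>Y\<rfloor>}"]) (auto intro: le_nat_floor)

lemma L3:
  fixes A :: "nat set" and a C :: real
  assumes a1: "a < 1" and C0: "C > 0"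
    and hA: "\<forall>\<^sub>F X in at_top. real (cnt A X) \<le> C * sqrt X / (ln X) powr a"
  shows "\<exists>K>0. \<exists>Y0. \<forall>Y\<ge>Y0. (\<Sum>n\<in>{n\<in>A. 1 \<le> n \<and> real n \<le> Y}. 1 / sqrt (real n)) \<le> K * (ln Y) powr (1-a)"
proof -
  define S where "S Y = (\<Sum>n\<in>{n\<in>A. 1 \<le> n \<and> real n \<le> Y}. 1 / sqrt (real n))" for Y
  obtain T0 where T0: "\<And>X. X \<ge> T0 \<Longrightarrow> real (cnt A X) \<le> C * sqrt X / (ln X) powr a"
    using hA unfolding eventually_at_top_linorder by blast
  obtain k0 :: nat where k0: "T0 < 2 ^ k0" using real_arch_pow[of 2 T0] by auto
  define F where "F n = S (2 ^ n)" for n :: nat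
  define D where "D = C * sqrt 2 * (ln 2) powr (-a)"
  define M where "M = max 1 (1/(1-a))"
  have D0: "D \<ge> 0" unfolding D_def using C0 by simp
  have M0: "M \<ge> 0" unfolding M_def by simp
  have S0: "S Y \<ge> 0" for Y unfolding S_def by (intro sum_nonneg) auto
  have inc: "F (Suc n) \<le> F n + D * (real n + 1) powr (-a)" if "k0 \<le> n" for n
  proof -
    define J where "J = {m\<in>A. 1 \<le> m \<and> 2 ^ n < real m \<and> real m \<le> 2 ^ Suc n}"
    have un: "{m\<in>A. 1 \<le> m \<and> real m \<le> 2 ^ Suc n} = {m\<in>A. 1 \<le> m \<and> real m \<le> 2 ^ n} \<union> J"
    proof -
      have "real m \<le> 2 ^ n \<Longrightarrow> real m \<le> 2 ^ Suc n" for m :: nat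
      proof -
        have "(2::real) ^ n \<le> 2 ^ Suc n" by simp
        thus "real m \<le> 2 ^ n \<Longrightarrow> real m \<le> 2 ^ Suc n" by linarith
      qed
      thus ?thesis unfolding J_def by (auto simp del: of_nat_le_iff)
    qed
    have finJ: "finite J" unfolding J_def
      by (rule finite_subset[OF _ fin_le[of A "2 ^ Suc n"]]) auto
    have "F (Suc n) = F n + (\<Sum>m\<in>J. 1 / sqrt (real m))"
      unfolding F_def S_def un
      by (rule sum.union_disjoint[OF fin_le finJ]) (auto simp: J_def)
    moreover have "(\<Sum>m\<in>J. 1 / sqrt (real m)) \<le> real (card J) * (1 / sqrt (2 ^ n))"
    proof (rule sum_bounded_above)
      fix m assume "m \<in> J"
      hence "2 ^ n < real m" unfolding J_def by auto
      thus "1 / sqrt (real m) \<le> 1 / sqrt (2 ^ n)"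
        by (intro divide_left_mono) auto
    qed
    moreover have "card J \<le> cnt A (2 ^ Suc n)"
      unfolding cnt_def J_def by (rule card_mono[OF fin_le]) auto
    moreover have "real (cnt A (2 ^ Suc n)) \<le> C * sqrt (2 ^ Suc n) / (ln (2 ^ Suc n)) powr a"
    proof (rule T0)
      have "(2::real) ^ k0 \<le> 2 ^ Suc n" using that by (intro power_increasing) auto
      thus "T0 \<le> 2 ^ Suc n" using k0 by linarith
    qed
    moreover have "C * sqrt (2 ^ Suc n) / (ln (2 ^ Suc n)) powr a * (1 / sqrt (2 ^ n))
        = D * (real n + 1) powr (-a)"
    proof -
      have "sqrt ((2::real) ^ Suc n) = sqrt 2 * sqrt (2 ^ n)" by (simp add: real_sqrt_mult)
      moreover have "ln ((2::real) ^ Suc n) = (real n + 1) * ln 2"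
        using ln_realpow[of 2 "Suc n"] by (simp del: power_Suc)
      moreover have "((real n + 1) * ln 2) powr a = (real n + 1) powr a * (ln 2) powr a"
        by (rule powr_mult)
      ultimately show ?thesis unfolding D_def by (simp add: powr_minus field_simps)
    qed
    ultimately show ?thesis
      by (smt (verit, best) mult_right_mono of_nat_le_iff divide_nonneg_nonneg real_sqrt_ge_zero zero_le_power)
  qed
  have ind: "F n \<le> F k0 + D * M * real n powr (1-a)" if "k0 \<le> n" for n
    using that
  proof (induction n rule: dec_induct)
    case base
    then show ?case using D0 M0 by simp
  next
    case (step n)
    have g: "(real n + 1) powr (-a) \<le> M * ((real n + 1) powr (1-a) - real n powr (1-a))"
      unfolding M_def by (rule growth) (use a1 in auto)
    have "F (Suc n) \<le> F n + D * (real n + 1) powr (-a)" using inc step by blast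
    also have "\<dots> \<le> F k0 + D * M * real n powr (1-a) + D * (M * ((real n + 1) powr (1-a) - real n powr (1-a)))"
      using step g D0 by (intro add_mono mult_left_mono) auto
    also have "\<dots> = F k0 + D * M * real (Suc n) powr (1-a)"
      by (simp add: algebra_simps)
    finally show ?case .
  qed
  define K where "K = S (2 ^ k0) + D * M * (2 / ln 2) powr (1-a) + 1"
  have Kpos: "K > 0" unfolding K_def using S0 D0 M0 by (simp add: add_nonneg_pos)
  have "\<forall>Y\<ge>max (2 ^ k0) 3. S Y \<le> K * (ln Y) powr (1-a)"
  proof (intro allI impI)
    fix Y :: real assume Y: "max (2 ^ k0) 3 \<le> Y"
    define n where "n = nat \<lceil>log 2 Y\<rceil>"
    have Ypos: "Y > 0" using Y by simp
    have lY1: "log 2 Y \<ge> 1" using Y by simp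
    have lnY1: "ln Y \<ge> 1"
    proof -
      have "exp 1 \<le> Y" using exp_le Y by linarith
      thus ?thesis using Ypos by (metis ln_exp ln_le_cancel_iff exp_gt_zero)
    qed
    have n1: "log 2 Y \<le> real n" unfolding n_def by linarith
    have n2: "real n \<le> log 2 Y + 1" unfolding n_def using lY1 by linarith
    have "Y = 2 powr (log 2 Y)" using Ypos by simp
    also have "\<dots> \<le> 2 powr (real n)" using n1 by simp
    also have "\<dots> = 2 ^ n" by (simp add: powr_realpow)
    finally have Yle: "Y \<le> 2 ^ n" .
    have "real k0 = log 2 (2 ^ k0)" by simp
    also have "\<dots> \<le> log 2 Y" using Y by (subst log_le_cancel_iff) auto
    finally have "k0 \<le> n" using n1 by linarith
    have xle: "x \<le> 2 ^ n" if "real x \<le> Y" for x :: nat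
    proof -
      have h: "real x \<le> 2 ^ n" using that Yle by linarith
      have "real (2 ^ n) = (2::real) ^ n" by simp
      hence "real x \<le> real (2 ^ n)" using h by linarith
      thus ?thesis by (simp only: of_nat_le_iff)
    qed
    have "S Y \<le> F n" unfolding F_def S_def
      by (rule sum_mono2[OF fin_le]) (use xle in auto)
    also have "\<dots> \<le> F k0 + D * M * real n powr (1-a)" by (rule ind) fact
    also have "real n powr (1-a) \<le> (2 / ln 2 * ln Y) powr (1-a)"
    proof (rule powr_mono2)
      have "real n \<le> 2 * log 2 Y" using n2 lY1 by linarith
      also have "\<dots> = 2 / ln 2 * ln Y" by (simp add: log_def)
      finally show "real n \<le> 2 / ln 2 * ln Y" .
    qed (use a1 in auto)
    also have "(2 / ln 2 * ln Y) powr (1-a) = (2 / ln 2) powr (1-a) * ln Y powr (1-a)"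
      using lnY1 by (subst powr_mult) auto
    finally have "S Y \<le> F k0 + D * M * ((2 / ln 2) powr (1 - a) * ln Y powr (1 - a))"
      using D0 M0 by (simp add: mult_left_mono)
    moreover have "F k0 \<le> F k0 * ln Y powr (1-a)"
      using ge_one_powr_ge_zero[of "ln Y" "1-a"] lnY1 a1 S0[of "2^k0"] unfolding F_def
      by (simp add: mult_le_cancel_left1)
    moreover have "0 \<le> ln Y powr (1-a)" by simp
    moreover have "K * ln Y powr (1-a) = F k0 * ln Y powr (1-a) + D * M * ((2 / ln 2) powr (1 - a) * ln Y powr (1 - a)) + ln Y powr (1-a)"
      unfolding K_def F_def by (simp add: algebra_simps)
    ultimately show "S Y \<le> K * (ln Y) powr (1-a)" by linarith
  qed
  thus ?thesis using Kpos unfolding S_def by blast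
qed


lemma pw:
  fixes u L b :: real assumes L: "L > 0" "L/2 \<le> u" "u \<le> L"
  shows "1 / (u powr b) \<le> 2 powr \<bar>b\<bar> * L powr (-b)"
proof -
  have u0: "u > 0" using L by linarith
  have e: "1 / (u powr b) = u powr (-b)" by (simp add: powr_minus divide_inverse)
  show ?thesis
  proof (cases "b \<ge> 0")
    case True
    have "(L/2) powr (-b) \<ge> u powr (-b)" using True L by (intro powr_mono2') auto
    moreover have "(L/2) powr (-b) = 2 powr b * L powr (-b)"
      using L by (simp add: powr_divide powr_minus field_simps)
    ultimately show ?thesis using True e by simp
  next
    case False
    have "u powr (-b) \<le> L powr (-b)" using False L u0 by (intro powr_mono2) auto
    moreover have "1 \<le> 2 powr \<bar>b\<bar>" by (rule ge_one_powr_ge_zero) auto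
    moreover have "L powr (-b) \<ge> 0" by simp
    moreover have "1 * L powr (-b) \<le> 2 powr \<bar>b\<bar> * L powr (-b)"
      using \<open>1 \<le> 2 powr \<bar>b\<bar>\<close> by (intro mult_right_mono) auto
    ultimately show ?thesis using e by linarith
  qed
qed

lemma Lhalf:
  fixes A B :: "nat set" and a b C :: real
  assumes A0: "0 \<notin> A" and B0: "0 \<notin> B" and a1: "a < 1" and C0: "C > 0"
    and hA: "\<forall>\<^sub>F X in at_top. real (cnt A X) \<le> C * sqrt X / (ln X) powr a"
    and hB: "\<forall>\<^sub>F X in at_top. real (cnt B X) \<le> C * sqrt X / (ln X) powr b"
  shows "\<exists>K>0. \<exists>X0. \<forall>X\<ge>X0. real (card {(x, y). x \<in> A \<and> y \<in> B \<and> real (x * y) \<le> X \<and> real x \<le> sqrt X})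
            \<le> K * sqrt X * (ln X) powr (1 - a - b)"
proof -
  obtain K1 Y0 where K1: "K1 > 0" and Y0: "\<And>Y. Y \<ge> Y0 \<Longrightarrow>
      (\<Sum>n\<in>{n\<in>A. 1 \<le> n \<and> real n \<le> Y}. 1 / sqrt (real n)) \<le> K1 * (ln Y) powr (1-a)"
    using L3[OF a1 C0 hA] by blast
  obtain T0 where T0: "\<And>X. X \<ge> T0 \<Longrightarrow> real (cnt B X) \<le> C * sqrt X / (ln X) powr b"
    using hB unfolding eventually_at_top_linorder by blast
  define cb where "cb = 2 powr \<bar>b\<bar>"
  define K where "K = C * cb * K1"
  have Kpos: "K > 0" unfolding K_def cb_def using C0 K1 by simp
  define X0 where "X0 = (max (max Y0 T0) 3)^2"
  have "\<forall>X\<ge>X0. real (card {(x, y). x \<in> A \<and> y \<in> B \<and> real (x * y) \<le> X \<and> real x \<le> sqrt X})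
            \<le> K * sqrt X * (ln X) powr (1 - a - b)"
  proof (intro allI impI)
    fix X :: real assume X: "X \<ge> X0"
    have sX: "sqrt X \<ge> max (max Y0 T0) 3"
      using real_sqrt_le_mono[OF X] unfolding X0_def by simp
    have "3 \<le> sqrt X" using sX by (simp only: max.bounded_iff)
    hence "0 < sqrt X" by linarith
    hence Xpos: "X > 0" using real_sqrt_gt_0_iff by blast
    have lnsX: "ln (sqrt X) = ln X / 2" using Xpos by (simp add: ln_sqrt)
    have lnsX1: "ln (sqrt X) \<ge> 1"
    proof -
      have "3 \<le> sqrt X" using sX by simp
      hence "exp 1 \<le> sqrt X" using exp_le by linarith
      moreover have "0 < exp (1::real)" by simp
      ultimately show ?thesis using ln_le_cancel_iff[of "exp 1" "sqrt X"] Xpos by simp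
    qed
    have lnX: "ln X \<ge> 2" using lnsX lnsX1 by linarith
    define I where "I = {x\<in>A. 1 \<le> x \<and> real x \<le> sqrt X}"
    define Bs where "Bs x = {y\<in>B. 1 \<le> y \<and> real y \<le> X / real x}" for x :: nat
    have sub: "{(x, y). x \<in> A \<and> y \<in> B \<and> real (x * y) \<le> X \<and> real x \<le> sqrt X} \<subseteq> Sigma I Bs"
    proof
      fix p assume "p \<in> {(x, y). x \<in> A \<and> y \<in> B \<and> real (x * y) \<le> X \<and> real x \<le> sqrt X}"
      then obtain x y where p: "p = (x, y)" and h: "x \<in> A" "y \<in> B" "real (x * y) \<le> X" "real x \<le> sqrt X"
        by auto
      have x1: "x \<ge> 1" using h A0 by (cases x) auto
      have y1: "y \<ge> 1" using h B0 by (cases y) auto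
      have "real y \<le> X / real x" using h(3) x1 by (simp add: pos_le_divide_eq mult.commute)
      thus "p \<in> Sigma I Bs" using p h x1 y1 unfolding I_def Bs_def by auto
    qed
    have finI: "finite I" unfolding I_def by (rule fin_le)
    have finBs: "finite (Bs x)" for x unfolding Bs_def by (rule fin_le)
    have finS: "finite (Sigma I Bs)" using finI finBs by (intro finite_SigmaI) auto
    have "card {(x, y). x \<in> A \<and> y \<in> B \<and> real (x * y) \<le> X \<and> real x \<le> sqrt X} \<le> card (Sigma I Bs)"
      by (rule card_mono[OF finS sub])
    also have "card (Sigma I Bs) = (\<Sum>x\<in>I. card (Bs x))"
      using finI finBs by simp
    also have "\<dots> = (\<Sum>x\<in>I. cnt B (X / real x))"
      unfolding Bs_def cnt_def by simp
    finally have c1: "real (card {(x, y). x \<in> A \<and> y \<in> B \<and> real (x * y) \<le> X \<and> real x \<le> sqrt X})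
        \<le> (\<Sum>x\<in>I. real (cnt B (X / real x)))" by (simp flip: of_nat_sum)
    have trm: "real (cnt B (X / real x)) \<le> (C * cb * ln X powr (-b) * sqrt X) * (1 / sqrt (real x))"
      if "x \<in> I" for x
    proof -
      have x1: "real x \<ge> 1" and xs: "real x \<le> sqrt X" using that unfolding I_def by auto
      have "X / real x \<ge> X / sqrt X" using x1 xs Xpos by (intro divide_left_mono) auto
      also have "X / sqrt X = sqrt X" using Xpos by (simp add: real_div_sqrt)
      finally have Xx: "X / real x \<ge> sqrt X" .
      have "T0 \<le> X / real x" using Xx sX by linarith
      hence h0: "real (cnt B (X / real x)) \<le> C * sqrt (X / real x) / (ln (X / real x)) powr b"
        by (rule T0)
      have h1: "C * sqrt (X / real x) / (ln (X / real x)) powr b = C * (sqrt X / sqrt (real x)) * (1 / (ln (X / real x)) powr b)"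
        by (simp add: real_sqrt_divide)
      have h2: "1 / (ln (X / real x)) powr b \<le> cb * ln X powr (-b)"
        unfolding cb_def
      proof (rule pw)
        show "0 < ln X" using lnX by simp
        have lx: "ln (X / real x) = ln X - ln (real x)" using Xpos x1 by (simp add: ln_div)
        have "ln (real x) \<le> ln (sqrt X)" using x1 xs by (intro ln_mono) auto
        moreover have "ln (real x) \<ge> 0" using x1 by simp
        ultimately show "ln X / 2 \<le> ln (X / real x)" "ln (X / real x) \<le> ln X"
          using lx lnsX by linarith+
      qed
      have h3: "C * (sqrt X / sqrt (real x)) * (1 / (ln (X / real x)) powr b) \<le> C * (sqrt X / sqrt (real x)) * (cb * ln X powr (-b))"
        using h2 C0 Xpos by (intro mult_left_mono) (auto intro!: divide_nonneg_nonneg mult_nonneg_nonneg)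
      have h4: "C * (sqrt X / sqrt (real x)) * (cb * ln X powr (-b)) = (C * cb * ln X powr (-b) * sqrt X) * (1 / sqrt (real x))"
        by simp
      show ?thesis using h0 h1 h3 h4 by linarith
    qed
    have "(\<Sum>x\<in>I. real (cnt B (X / real x))) \<le> (\<Sum>x\<in>I. (C * cb * ln X powr (-b) * sqrt X) * (1 / sqrt (real x)))"
      by (rule sum_mono) (rule trm)
    also have "\<dots> = (C * cb * ln X powr (-b) * sqrt X) * (\<Sum>x\<in>I. 1 / sqrt (real x))"
      by (simp add: sum_distrib_left)
    finally have s1: "(\<Sum>x\<in>I. real (cnt B (X / real x))) \<le> (C * cb * ln X powr (-b) * sqrt X) * (\<Sum>x\<in>I. 1 / sqrt (real x))" .
    have "Y0 \<le> sqrt X" using sX by simp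
    hence s2: "(\<Sum>x\<in>I. 1 / sqrt (real x)) \<le> K1 * (ln (sqrt X)) powr (1-a)"
      unfolding I_def by (rule Y0)
    have s3: "(ln (sqrt X)) powr (1-a) \<le> (ln X) powr (1-a)"
      using lnsX lnsX1 a1 by (intro powr_mono2) auto
    have s4: "K1 * (ln (sqrt X)) powr (1-a) \<le> K1 * (ln X) powr (1-a)"
      using s3 K1 by (intro mult_left_mono) auto
    have cpos: "C * cb * ln X powr (-b) * sqrt X \<ge> 0" using C0 Xpos unfolding cb_def by (auto intro!: mult_nonneg_nonneg)
    have "(\<Sum>x\<in>I. real (cnt B (X / real x))) \<le> C * cb * ln X powr (-b) * sqrt X * (K1 * ln X powr (1-a))"
      using s1 mult_left_mono[OF order_trans[OF s2 s4] cpos] by linarith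
    also have "\<dots> = K * sqrt X * (ln X powr (-b) * ln X powr (1-a))"
      unfolding K_def by (simp add: algebra_simps)
    also have "ln X powr (-b) * ln X powr (1-a) = ln X powr (1 - a - b)"
      by (simp flip: powr_add)
    finally show "real (card {(x, y). x \<in> A \<and> y \<in> B \<and> real (x * y) \<le> X \<and> real x \<le> sqrt X})
            \<le> K * sqrt X * (ln X) powr (1 - a - b)" using c1 by linarith
  qed
  thus ?thesis using Kpos by blast
qed


theorem lemma2p1:
  fixes A B :: "nat set" and \<alpha> \<beta> C :: real
  assumes "0 \<notin> A" and "0 \<notin> B"
    and "\<alpha> < 1" and "\<beta> < 1"
    and "C > 0"
    and "\<forall>\<^sub>F X in at_top. real (cnt A X) \<le> C * sqrt X / (ln X) powr \<alpha>"
    and "\<forall>\<^sub>F X in at_top. real (cnt B X) \<le> C * sqrt X / (ln X) powr \<beta>"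
  shows "\<exists>C'>0. \<forall>\<^sub>F X in at_top.
           cnt (setmul A B) X \<le> card {(a, b). a \<in> A \<and> b \<in> B \<and> real (a * b) \<le> X}
         \<and> real (card {(a, b). a \<in> A \<and> b \<in> B \<and> real (a * b) \<le> X})
             \<le> C' * sqrt X * (ln X) powr (1 - \<alpha> - \<beta>)"
proof -
  obtain K1 X1 where K1: "K1 > 0" and X1: "\<And>X. X \<ge> X1 \<Longrightarrow>
      real (card {(x, y). x \<in> A \<and> y \<in> B \<and> real (x * y) \<le> X \<and> real x \<le> sqrt X})
            \<le> K1 * sqrt X * (ln X) powr (1 - \<alpha> - \<beta>)"
    using Lhalf[OF assms(1,2,3,5,6,7)] by blast
  obtain K2 X2 where K2: "K2 > 0" and X2: "\<And>X. X \<ge> X2 \<Longrightarrow>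
      real (card {(x, y). x \<in> B \<and> y \<in> A \<and> real (x * y) \<le> X \<and> real x \<le> sqrt X})
            \<le> K2 * sqrt X * (ln X) powr (1 - \<beta> - \<alpha>)"
    using Lhalf[OF assms(2,1,4,5,7,6)] by blast
  have ex: "1 - \<beta> - \<alpha> = 1 - \<alpha> - \<beta>" by simp
  have "\<forall>X\<ge>max (max X1 X2) 0.
           cnt (setmul A B) X \<le> card {(a, b). a \<in> A \<and> b \<in> B \<and> real (a * b) \<le> X}
         \<and> real (card {(a, b). a \<in> A \<and> b \<in> B \<and> real (a * b) \<le> X})
             \<le> (K1 + K2) * sqrt X * (ln X) powr (1 - \<alpha> - \<beta>)"
  proof (intro allI impI)
    fix X :: real assume X: "max (max X1 X2) 0 \<le> X"
    have XX1: "X \<ge> X1" and XX2: "X \<ge> X2" and X0: "X \<ge> 0" using X by auto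
    define P where "P = {(a, b). a \<in> A \<and> b \<in> B \<and> real (a * b) \<le> X}"
    define P1 where "P1 = {(x, y). x \<in> A \<and> y \<in> B \<and> real (x * y) \<le> X \<and> real x \<le> sqrt X}"
    define P2 where "P2 = {(x, y). x \<in> B \<and> y \<in> A \<and> real (x * y) \<le> X \<and> real x \<le> sqrt X}"
    have finP: "finite P"
    proof (rule finite_subset)
      show "P \<subseteq> {..nat \<lfloor>X\<rfloor>} \<times> {..nat \<lfloor>X\<rfloor>}"
      proof
        fix p assume "p \<in> P"
        then obtain a b where p: "p = (a, b)" and h: "a \<in> A" "b \<in> B" "real (a * b) \<le> X"
          unfolding P_def by auto
        have a1: "a \<ge> 1" using h assms(1) by (cases a) auto
        have b1: "b \<ge> 1" using h assms(2) by (cases b) auto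
        have "a \<le> a * b" "b \<le> a * b" using a1 b1 by auto
        hence "real a \<le> real (a * b)" "real b \<le> real (a * b)" by (simp_all only: of_nat_le_iff)
        hence "real a \<le> X" "real b \<le> X" using h(3) by linarith+
        thus "p \<in> {..nat \<lfloor>X\<rfloor>} \<times> {..nat \<lfloor>X\<rfloor>}" using p by (auto intro: le_nat_floor)
      qed
    qed auto
    have part1: "cnt (setmul A B) X \<le> card P"
    proof -
      have "{n \<in> setmul A B. 1 \<le> n \<and> real n \<le> X} \<subseteq> (\<lambda>(a, b). a * b) ` P"
        unfolding setmul_def P_def by auto
      hence "card {n \<in> setmul A B. 1 \<le> n \<and> real n \<le> X} \<le> card ((\<lambda>(a, b). a * b) ` P)"
        using finP by (intro card_mono) auto
      also have "\<dots> \<le> card P" by (rule card_image_le[OF finP])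
      finally show ?thesis unfolding cnt_def .
    qed
    have cover: "P \<subseteq> P1 \<union> (\<lambda>(x, y). (y, x)) ` P2"
    proof
      fix p assume "p \<in> P"
      then obtain a b where p: "p = (a, b)" and h: "a \<in> A" "b \<in> B" "real (a * b) \<le> X"
        unfolding P_def by auto
      show "p \<in> P1 \<union> (\<lambda>(x, y). (y, x)) ` P2"
      proof (cases "real a \<le> sqrt X")
        case True
        then show ?thesis using p h unfolding P1_def by auto
      next
        case False
        have "real b \<le> sqrt X"
        proof (rule ccontr)
          assume "\<not> real b \<le> sqrt X"
          moreover have "0 \<le> sqrt X" using X0 by simp
          ultimately have "sqrt X * sqrt X < real a * real b" using False
            by (intro mult_strict_mono) linarith+
          thus False using h(3) X0 by simp
        qed
        moreover have "(b, a) \<in> P2" using h calculation unfolding P2_def by (auto simp: mult.commute)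
        ultimately show ?thesis using p by force
      qed
    qed
    have sP: "P1 \<subseteq> P" "P2 \<subseteq> (\<lambda>(x, y). (y, x)) ` P"
      unfolding P1_def P2_def P_def by (auto simp: image_iff mult.commute)
    have finP2: "finite P2" using sP(2) finP by (meson finite_imageI finite_subset)
    have "card P \<le> card (P1 \<union> (\<lambda>(x, y). (y, x)) ` P2)"
    proof (rule card_mono[OF _ cover])
      show "finite (P1 \<union> (\<lambda>(x, y). (y, x)) ` P2)" using finP finP2 sP
        by (meson finite_Un finite_imageI finite_subset)
    qed
    also have "\<dots> \<le> card P1 + card ((\<lambda>(x, y). (y, x)) ` P2)" by (rule card_Un_le)
    also have "card ((\<lambda>(x, y). (y, x)) ` P2) \<le> card P2"
      by (rule card_image_le[OF finP2])
    finally have "card P \<le> card P1 + card P2" by simp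
    hence "real (card P) \<le> real (card P1) + real (card P2)" by linarith
    also have "\<dots> \<le> K1 * sqrt X * (ln X) powr (1 - \<alpha> - \<beta>) + K2 * sqrt X * (ln X) powr (1 - \<alpha> - \<beta>)"
      using X1[OF XX1] X2[OF XX2] unfolding P1_def P2_def ex by linarith
    also have "\<dots> = (K1 + K2) * sqrt X * (ln X) powr (1 - \<alpha> - \<beta>)" by (simp add: algebra_simps)
    finally show "cnt (setmul A B) X \<le> card {(a, b). a \<in> A \<and> b \<in> B \<and> real (a * b) \<le> X}
         \<and> real (card {(a, b). a \<in> A \<and> b \<in> B \<and> real (a * b) \<le> X})
             \<le> (K1 + K2) * sqrt X * (ln X) powr (1 - \<alpha> - \<beta>)"
      using part1 unfolding P_def by simp
  qed
  hence "\<forall>\<^sub>F X in at_top.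
           cnt (setmul A B) X \<le> card {(a, b). a \<in> A \<and> b \<in> B \<and> real (a * b) \<le> X}
         \<and> real (card {(a, b). a \<in> A \<and> b \<in> B \<and> real (a * b) \<le> X})
             \<le> (K1 + K2) * sqrt X * (ln X) powr (1 - \<alpha> - \<beta>)"
    unfolding eventually_at_top_linorder by blast
  thus ?thesis using K1 K2 by (intro exI[of _ "K1 + K2"]) auto
qed

end
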